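(* Let $0<\sigma<\frac{1}{2}$. There is a constant $C_\sigma>0$ depending only on $\sigma$ such that for all $\xi_1,\xi_2\in\mathbb{R}$ with $\xi_1\leq\xi_2$, the function $$E_1(\xi;\xi_1,\xi_2)=\begin{cases} e^{\xi-\xi_1}-e^{\xi-\xi_2}, & \xi\leq\xi_1,\\ 0, & \text{otherwise},\end{cases}$$ satisfies $$\left(\int_{\mathbb{R}}|k|^{2\sigma}\,\big|\mathcal{F}(E_1(\cdot;\xi_1,\xi_2))(k)\big|^2\,dk\right)^{1/2}\leq C_\sigma\,(\xi_2-\xi_1).$$
   Context: The Fourier transform is normalized as $\mathcal{F}(f)(k)=\frac{1}{2\pi}\int_{\mathbb{R}}e^{-\mathrm{i}k\xi}f(\xi)\,d\xi$ for $k\in\mathbb{R}$. *)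

theory Defs
  imports "HOL-Analysis.Analysis"
begin

definition E1 :: "real \<Rightarrow> real \<Rightarrow> real \<Rightarrow> real" where
  "E1 xi1 xi2 \<xi> = (if \<xi> \<le> xi1 then exp (\<xi> - xi1) - exp (\<xi> - xi2) else 0)"

definition fourier :: "(real \<Rightarrow> complex) \<Rightarrow> real \<Rightarrow> complex" where
  "fourier f k = complex_of_real (1 / (2 * pi)) *
     (LINT \<xi>|lborel. exp (- \<i> * complex_of_real (k * \<xi>)) * f \<xi>)"

end

theory Submission
  imports Defs
begin

lemma ftc_exp:
  fixes k a :: real
  defines "z \<equiv> Complex 1 (-k)"
  shows "(LBINT x=-\<infinity>..ereal a. exp (z * of_real x)) = exp (z * of_real a) / z"
proof -
  have z0: "z \<noteq> 0" by (simp add: z_def complex_eq_iff)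
  have Rez: "Re z = 1" by (simp add: z_def)
  have nrm: "norm (exp (z * of_real x)) = exp x" for x
    by (simp add: z_def norm_exp_eq_Re)
  have int: "set_integrable lborel (einterval (-\<infinity>) (ereal a)) (\<lambda>x. exp (z * of_real x))"
  proof -
    have e: "einterval (-\<infinity>) (ereal a) = {..<a}" by (auto simp: einterval_def)
    have "set_integrable lborel (einterval (-\<infinity>) (ereal a)) (\<lambda>x. exp x)"
      by (rule interval_integral_FTC_nonneg(1)[where F=exp and A=0 and B="exp a"])
         (auto intro!: derivative_eq_intros continuous_intros tendsto_intros
               simp: ereal_tendsto_simps exp_at_bot)
    then have "set_integrable lborel {..<a} (\<lambda>x. exp x)" by (simp add: e)
    then show ?thesis unfolding e set_integrable_def
      apply (rule Bochner_Integration.integrable_bound)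
       apply (auto simp: nrm indicator_def Rez)
      done
  qed
  have "(LBINT x=-\<infinity>..ereal a. exp (z * of_real x)) = exp (z * of_real a) / z - 0"
  proof (rule interval_integral_FTC_integrable[where F="\<lambda>x. exp (z * of_real x) / z"])
    show "((\<lambda>x. exp (z * of_real x) / z) has_vector_derivative exp (z * of_real x)) (at x)" for x
    proof -
      have "((\<lambda>w. exp (z * w) / z) has_field_derivative exp (z * of_real x)) (at (of_real x))"
        using z0 by (auto intro!: derivative_eq_intros)
      from has_vector_derivative_real_field[OF this] show ?thesis by simp
    qed
    show "isCont (\<lambda>x. exp (z * of_real x)) x" for x by (intro continuous_intros)
    show "(((\<lambda>x. exp (z * of_real x) / z) \<circ> real_of_ereal) \<longlongrightarrow> 0) (at_right (-\<infinity>))"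
      unfolding ereal_tendsto_simps
    proof (rule tendsto_norm_zero_cancel)
      have "((\<lambda>x. exp x / norm z) \<longlongrightarrow> 0 / norm z) at_bot"
        by (intro tendsto_divide exp_at_bot tendsto_const) (use z0 in auto)
      moreover have "(\<lambda>x. norm (exp (z * of_real x) / z)) = (\<lambda>x. exp x / norm z)"
        by (rule ext) (simp only: norm_divide nrm)
      ultimately show "((\<lambda>x. norm (exp (z * of_real x) / z)) \<longlongrightarrow> 0) at_bot"
        by simp
    qed
    show "(((\<lambda>x. exp (z * of_real x) / z) \<circ> real_of_ereal) \<longlongrightarrow> exp (z * of_real a) / z) (at_left (ereal a))"
      unfolding ereal_tendsto_simps
    proof -
      have "isCont (\<lambda>x. exp (z * of_real x) / z) a" using z0 by (intro continuous_intros)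
      then show "((\<lambda>x. exp (z * of_real x) / z) \<longlongrightarrow> exp (z * of_real a) / z) (at_left a)"
        unfolding isCont_def filterlim_at_split by blast
    qed
  qed (use int in auto)
  then show ?thesis by simp
qed
lemma fourier_E1:
  fixes a b k :: real
  shows "cmod (fourier (\<lambda>\<xi>. complex_of_real (E1 a b \<xi>)) k) = \<bar>1 - exp (a - b)\<bar> / (2 * pi * sqrt (1 + k\<^sup>2))"
proof -
  define z where "z = Complex 1 (-k)"
  define c where "c = exp (-a) - exp (-b)"
  have ae: "AE \<xi> in lborel. exp (- \<i> * complex_of_real (k * \<xi>)) * complex_of_real (E1 a b \<xi>)
     = indicator {..<a} \<xi> *\<^sub>R (complex_of_real c * exp (z * of_real \<xi>))"
    using AE_lborel_singleton[of a]
  proof eventually_elim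
    case (elim \<xi>)
    show ?case
    proof (cases "\<xi> < a")
      case True
      have "complex_of_real (E1 a b \<xi>) = of_real c * exp (of_real \<xi>)"
        using True by (simp add: E1_def c_def exp_diff field_simps exp_minus flip: exp_of_real)
      moreover have "exp (- \<i> * complex_of_real (k * \<xi>)) * exp (of_real \<xi>) = exp (z * of_real \<xi>)"
      proof -
        have "- \<i> * complex_of_real (k * \<xi>) + of_real \<xi> = z * of_real \<xi>"
          by (simp add: z_def complex_eq_iff)
        then show ?thesis by (simp flip: exp_add)
      qed
      ultimately show ?thesis using True by (simp add: algebra_simps)
    next
      case False
      then show ?thesis using elim by (simp add: E1_def)
    qed
  qed
  have "(LINT \<xi>|lborel. exp (- \<i> * complex_of_real (k * \<xi>)) * complex_of_real (E1 a b \<xi>))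
      = (LINT \<xi>|lborel. indicator {..<a} \<xi> *\<^sub>R (complex_of_real c * exp (z * of_real \<xi>)))"
    by (rule integral_cong_AE) (use ae in \<open>auto simp: E1_def\<close>)
  also have "\<dots> = (LINT \<xi>:{..<a}|lborel. complex_of_real c * exp (z * of_real \<xi>))"
    by (simp only: set_lebesgue_integral_def)
  also have "\<dots> = complex_of_real c * (LINT \<xi>:{..<a}|lborel. exp (z * of_real \<xi>))"
    by (rule set_integral_mult_right)
  also have "(LINT \<xi>:{..<a}|lborel. exp (z * of_real \<xi>)) = (LBINT x=-\<infinity>..ereal a. exp (z * of_real x))"
    by (simp add: interval_lebesgue_integral_def einterval_def lessThan_def)
  also have "\<dots> = exp (z * of_real a) / z" unfolding z_def by (rule ftc_exp)
  finally have I: "(LINT \<xi>|lborel. exp (- \<i> * complex_of_real (k * \<xi>)) * complex_of_real (E1 a b \<xi>))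
      = complex_of_real c * (exp (z * of_real a) / z)" .
  have nz: "cmod z = sqrt (1 + k\<^sup>2)" by (simp add: z_def cmod_def)
  have ne: "cmod (exp (z * of_real a)) = exp a" by (simp add: z_def norm_exp_eq_Re)
  have "\<bar>c\<bar> * exp a = \<bar>1 - exp (a - b)\<bar>"
    by (simp add: c_def exp_diff exp_minus field_simps abs_mult[symmetric])
  moreover have "cmod (fourier (\<lambda>\<xi>. complex_of_real (E1 a b \<xi>)) k) = \<bar>1/(2*pi)\<bar> * (\<bar>c\<bar> * (exp a / sqrt (1 + k\<^sup>2)))"
    unfolding fourier_def I by (simp only: norm_mult norm_divide nz ne norm_of_real)
  ultimately show ?thesis by simp
qed
lemma J_fin:
  fixes \<sigma> :: real
  assumes "0 < \<sigma>" and "\<sigma> < 1/2"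
  shows "(\<integral>\<^sup>+ k. ennreal (\<bar>k\<bar> powr (2 * \<sigma>) / (1 + k\<^sup>2)) \<partial>lborel) < \<infinity>"
proof -
  define e where "e = 2 * \<sigma> - 2"
  have e: "e < -1" using assms by (simp add: e_def)
  define h1 :: "real \<Rightarrow> ennreal" where "h1 k = indicator {-1..1} k" for k
  define h2 :: "real \<Rightarrow> ennreal" where "h2 k = ennreal (k powr e) * indicator {1..} k" for k
  have m2: "h2 \<in> borel_measurable borel" unfolding h2_def by measurable
  have m1: "h1 \<in> borel_measurable borel" unfolding h1_def by measurable
  have m3: "(\<lambda>k. h2 (-k)) \<in> borel_measurable borel" using m2 by measurable
  have pw: "ennreal (\<bar>k\<bar> powr (2 * \<sigma>) / (1 + k\<^sup>2)) \<le> h1 k + (h2 k + h2 (-k))" for k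
  proof -
    consider "\<bar>k\<bar> \<le> 1" | "k > 1" | "k < -1" by linarith
    then show ?thesis
    proof cases
      case 1
      have "\<bar>k\<bar> powr (2 * \<sigma>) \<le> 1" using 1 assms by (intro powr_le1) auto
      moreover have "1 \<le> 1 + k\<^sup>2" by simp
      ultimately have "\<bar>k\<bar> powr (2 * \<sigma>) / (1 + k\<^sup>2) \<le> 1"
        by (simp add: divide_le_eq_1) (smt (verit) zero_le_power2)
      moreover have "h1 k = 1" using 1 by (auto simp: h1_def indicator_def)
      ultimately have "ennreal (\<bar>k\<bar> powr (2 * \<sigma>) / (1 + k\<^sup>2)) \<le> h1 k"
        by (metis ennreal_1 ennreal_leI)
      then show ?thesis by (meson add_increasing2 order_trans zero_le le_iff_add)
    next
      case 2
      have "\<bar>k\<bar> powr (2 * \<sigma>) / (1 + k\<^sup>2) \<le> \<bar>k\<bar> powr (2 * \<sigma>) / k\<^sup>2"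
        using 2 by (intro divide_left_mono) (auto intro!: mult_pos_pos add_pos_nonneg)
      also have "\<dots> = k powr e" using 2 by (simp add: e_def powr_diff powr_numeral)
      finally have "ennreal (\<bar>k\<bar> powr (2 * \<sigma>) / (1 + k\<^sup>2)) \<le> h2 k"
        using 2 by (simp add: h2_def ennreal_leI)
      then show ?thesis by (metis add.commute add_increasing2 zero_le order_trans le_iff_add)
    next
      case 3
      have "\<bar>k\<bar> powr (2 * \<sigma>) / (1 + k\<^sup>2) \<le> \<bar>k\<bar> powr (2 * \<sigma>) / k\<^sup>2"
        using 3 by (intro divide_left_mono) (auto intro!: mult_pos_pos add_pos_nonneg)
      also have "\<dots> = (-k) powr e" using 3 by (simp add: e_def powr_diff powr_numeral)
      finally have "ennreal (\<bar>k\<bar> powr (2 * \<sigma>) / (1 + k\<^sup>2)) \<le> h2 (-k)"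
        using 3 by (simp add: h2_def ennreal_leI)
      then show ?thesis by (metis add.commute add_increasing2 zero_le order_trans le_iff_add)
    qed
  qed
  have I2: "(\<integral>\<^sup>+ k. h2 k \<partial>lborel) = ennreal (- (1 powr (e + 1)) / (e + 1))"
    unfolding h2_def
    by (rule nn_integral_has_integral_lebesgue') (use has_integral_powr_to_inf[OF e, of 1] in auto)
  have I3: "(\<integral>\<^sup>+ k. h2 (-k) \<partial>lborel) = (\<integral>\<^sup>+ k. h2 k \<partial>lborel)"
  proof -
    have "(\<integral>\<^sup>+ k. h2 k \<partial>lborel) = (\<integral>\<^sup>+ k. h2 k \<partial>(distr lborel borel uminus))"
      by (simp add: lborel_distr_uminus)
    also have "\<dots> = (\<integral>\<^sup>+ k. h2 (-k) \<partial>lborel)"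
      by (rule nn_integral_distr) (use m2 in auto)
    finally show ?thesis by simp
  qed
  have I1: "(\<integral>\<^sup>+ k. h1 k \<partial>lborel) = 2"
    unfolding h1_def by simp
  have "(\<integral>\<^sup>+ k. ennreal (\<bar>k\<bar> powr (2 * \<sigma>) / (1 + k\<^sup>2)) \<partial>lborel)
      \<le> (\<integral>\<^sup>+ k. h1 k + (h2 k + h2 (-k)) \<partial>lborel)"
    by (rule nn_integral_mono) (rule pw)
  also have "\<dots> = (\<integral>\<^sup>+ k. h1 k \<partial>lborel) + ((\<integral>\<^sup>+ k. h2 k \<partial>lborel) + (\<integral>\<^sup>+ k. h2 (-k) \<partial>lborel))"
    using m1 m2 m3 by (simp add: nn_integral_add)
  also have "\<dots> < \<infinity>" unfolding I1 I2 I3 by (simp add: less_top[symmetric])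
  finally show ?thesis .
qed
theorem lemma3p1:
  fixes \<sigma> :: real
  assumes "0 < \<sigma>" and "\<sigma> < 1/2"
  shows "\<exists>C>0. \<forall>xi1 xi2 :: real. xi1 \<le> xi2 \<longrightarrow>
     sqrt (enn2real (\<integral>\<^sup>+ k. ennreal (\<bar>k\<bar> powr (2 * \<sigma>) *
        (cmod (fourier (\<lambda>\<xi>. complex_of_real (E1 xi1 xi2 \<xi>)) k))\<^sup>2) \<partial>lborel))
       \<le> C * (xi2 - xi1)
     \<and> (\<integral>\<^sup>+ k. ennreal (\<bar>k\<bar> powr (2 * \<sigma>) *
        (cmod (fourier (\<lambda>\<xi>. complex_of_real (E1 xi1 xi2 \<xi>)) k))\<^sup>2) \<partial>lborel) < \<infinity>"
proof -
  define J where "J = (\<integral>\<^sup>+ k. ennreal (\<bar>k\<bar> powr (2 * \<sigma>) / (1 + k\<^sup>2)) \<partial>lborel)"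
  have Jfin: "J < \<infinity>" unfolding J_def by (rule J_fin[OF assms])
  define Jr where "Jr = enn2real J"
  have Jr0: "0 \<le> Jr" by (simp add: Jr_def)
  have JJ: "J = ennreal Jr" using Jfin by (simp add: Jr_def less_top)
  define C where "C = sqrt Jr / (2 * pi) + 1"
  have C0: "C > 0" using Jr0 by (simp add: C_def add_nonneg_pos)
  have "\<forall>xi1 xi2 :: real. xi1 \<le> xi2 \<longrightarrow>
     sqrt (enn2real (\<integral>\<^sup>+ k. ennreal (\<bar>k\<bar> powr (2 * \<sigma>) *
        (cmod (fourier (\<lambda>\<xi>. complex_of_real (E1 xi1 xi2 \<xi>)) k))\<^sup>2) \<partial>lborel))
       \<le> C * (xi2 - xi1)
     \<and> (\<integral>\<^sup>+ k. ennreal (\<bar>k\<bar> powr (2 * \<sigma>) *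
        (cmod (fourier (\<lambda>\<xi>. complex_of_real (E1 xi1 xi2 \<xi>)) k))\<^sup>2) \<partial>lborel) < \<infinity>"
  proof (intro allI impI)
    fix a b :: real
    assume ab: "a \<le> b"
    define D where "D = 1 - exp (a - b)"
    have D0: "0 \<le> D" using ab by (simp add: D_def)
    have Dle: "D \<le> b - a" using exp_ge_add_one_self[of "a - b"] unfolding D_def by linarith
    have pt: "ennreal (\<bar>k\<bar> powr (2 * \<sigma>) * (cmod (fourier (\<lambda>\<xi>. complex_of_real (E1 a b \<xi>)) k))\<^sup>2)
        = ennreal ((D / (2 * pi))\<^sup>2) * ennreal (\<bar>k\<bar> powr (2 * \<sigma>) / (1 + k\<^sup>2))" for k
    proof -
      have s: "(sqrt (1 + k\<^sup>2))\<^sup>2 = 1 + k\<^sup>2" by (simp add: add_nonneg_nonneg)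
      have "\<bar>k\<bar> powr (2 * \<sigma>) * (cmod (fourier (\<lambda>\<xi>. complex_of_real (E1 a b \<xi>)) k))\<^sup>2
          = (D / (2 * pi))\<^sup>2 * (\<bar>k\<bar> powr (2 * \<sigma>) / (1 + k\<^sup>2))"
        unfolding fourier_E1 using D0
        by (simp add: D_def[symmetric] power_divide power_mult_distrib s)
      then show ?thesis by (simp add: ennreal_mult'[symmetric])
    qed
    have N: "(\<integral>\<^sup>+ k. ennreal (\<bar>k\<bar> powr (2 * \<sigma>) * (cmod (fourier (\<lambda>\<xi>. complex_of_real (E1 a b \<xi>)) k))\<^sup>2) \<partial>lborel)
        = ennreal ((D / (2 * pi))\<^sup>2 * Jr)"
      unfolding pt
      by (subst nn_integral_cmult) (auto simp: J_def[symmetric] JJ ennreal_mult')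
    have "sqrt ((D / (2 * pi))\<^sup>2 * Jr) = D / (2 * pi) * sqrt Jr"
      using D0 by (simp add: real_sqrt_mult)
    also have "\<dots> \<le> (b - a) / (2 * pi) * sqrt Jr"
      using Dle Jr0 by (intro mult_right_mono divide_right_mono) auto
    also have "\<dots> \<le> C * (b - a)"
      using ab Jr0 by (simp add: C_def algebra_simps)
    finally show "sqrt (enn2real (\<integral>\<^sup>+ k. ennreal (\<bar>k\<bar> powr (2 * \<sigma>) *
        (cmod (fourier (\<lambda>\<xi>. complex_of_real (E1 a b \<xi>)) k))\<^sup>2) \<partial>lborel))
       \<le> C * (b - a)
     \<and> (\<integral>\<^sup>+ k. ennreal (\<bar>k\<bar> powr (2 * \<sigma>) *
        (cmod (fourier (\<lambda>\<xi>. complex_of_real (E1 a b \<xi>)) k))\<^sup>2) \<partial>lborel) < \<infinity>"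
      unfolding N using D0 Jr0 by simp
  qed
  then show ?thesis using C0 by blast
qed
end
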